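(* Assume (A1)–(A4). Then for all $k\ge0$ the vectors produced by Byz-VR-MARINA satisfy $$\frac{1}{G(G-1)}\sum_{i,l\in\mathcal G}\mathbb E\|g_i^{k+1}-g_l^{k+1}\|^2\le A'\,\mathbb E\|x^{k+1}-x^k\|^2+8Bp\,\mathbb E\|\nabla f(x^k)\|^2+4p\zeta^2,$$ where $A'=8BpL^2+4(1-p)\Big(\omega L^2+(1+\omega)L_\pm^2+\frac{(1+\omega)\mathcal L_\pm^2}{b}\Big)$.
   Context: Setting. There are $n$ workers indexed by $[n]=\mathcal G\sqcup\mathcal B$: $\mathcal G$ is the set of good workers, $G=|\mathcal G|\ge2$, and $\mathcal B$ is the set of Byzantine workers with $|\mathcal B|\le\delta n$, $0\le\delta<1/2$. For $i\in\mathcal G$, $f_i(x)=\frac1m\sum_{j=1}^m f_{i,j}(x)$ with differentiable $f_{i,j}:\mathbb R^d\to\mathbb R$, and $f=\frac1G\sum_{i\in\mathcal G}f_i$. All expectations $\mathbb E$ are full expectations. (A1) $f$ is $L$-smooth ($\|\nabla f(x)-\nabla f(y)\|\le L\|x-y\|$ for all $x,y$) and $f_*=\inf_x f(x)>-\infty$. (A2) ($(B,\zeta^2)$-heterogeneity) For some $B,\zeta\ge0$: $\frac1G\sum_{i\in\mathcal G}\|\nabla f_i(x)-\nabla f(x)\|^2\le B\|\nabla f(x)\|^2+\zeta^2$ for all $x$. (A3) (global Hessian variance) For some $L_\pm\ge0$: $\frac1G\sum_{i\in\mathcal G}\|\nabla f_i(x)-\nabla f_i(y)\|^2-\|\nabla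 f(x)-\nabla f(y)\|^2\le L_\pm^2\|x-y\|^2$ for all $x,y$. (A4) (local Hessian variance) There is a batch size $b\ge1$ and, for each $i\in\mathcal G$ and $x,y$, a random vector $\widehat\Delta_i(x,y)$ with $\mathbb E[\widehat\Delta_i(x,y)]=\Delta_i(x,y):=\nabla f_i(x)-\nabla f_i(y)$ and $\frac1G\sum_{i\in\mathcal G}\mathbb E\|\widehat\Delta_i(x,y)-\Delta_i(x,y)\|^2\le\frac{\mathcal L_\pm^2}{b}\|x-y\|^2$ for some $\mathcal L_\pm\ge0$. Compressor: $\mathcal Q:\mathbb R^d\to\mathbb R^d$ is a stochastic map with $\mathbb E[\mathcal Q(x)]=x$ and $\mathbb E\|\mathcal Q(x)-x\|^2\le\omega\|x\|^2$ for all $x$, for some $\omega\ge0$. Algorithm Byz-VR-MARINA with stepsize $\gamma>0$, probability $p\in(0,1]$, start $x^0$, and initial vector $g^0\in\mathbb R^d$ (possibly random). For $k=0,1,2,\dots$: draw $c_k\sim\mathrm{Bernoulli}(p)$ independently of everything else; set $x^{k+1}=x^k-\gamma g^k$; each good worker $i\in\mathcal G$ sets $g_i^{k+1}=\nabla f_i(x^{k+1})$ if $c_k=1$ and $g_i^{k+1}=g^k+\mathcal Q(\widehat\Delta_i(x^{k+1},x^k))$ if $c_k=0$, where, conditionally on the past and on $c_k$, the estimators $\widehat\Delta_i$ and the compressions are sampled freshly and independently across $i\in\mathcal G$ (the compression being applied with fresh randomness to its input); each Byzantine worker $i\in\mathcal B$ sends an arbitrary vector $g_i^{k+1}$ (which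 may depend on everything); finally $g^{k+1}=\mathrm{ARAgg}(g_1^{k+1},\dots,g_n^{k+1})$. *)

theory Defs
  imports "HOL-Probability.Probability"
begin

definition nabla :: "('v::euclidean_space \<Rightarrow> real) \<Rightarrow> 'v \<Rightarrow> 'v" where
  "nabla F x = (THE D. GDERIV F x :> D)"

end

theory Submission
  imports Defs
begin



lemma linear_gderiv_rep:
  fixes F :: "'v::euclidean_space \<Rightarrow> real"
  assumes "linear F"
  shows "F = (\<lambda>h. h \<bullet> (\<Sum>b\<in>Basis. F b *\<^sub>R b))"
proof
  fix h :: 'v
  have "F h = F (\<Sum>b\<in>Basis. (h \<bullet> b) *\<^sub>R b)" by (simp add: euclidean_representation)
  also have "\<dots> = (\<Sum>b\<in>Basis. (h \<bullet> b) * F b)"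
    using assms by (simp add: linear_sum linear_scale)
  also have "\<dots> = h \<bullet> (\<Sum>b\<in>Basis. F b *\<^sub>R b)"
    by (simp add: inner_sum_right mult.commute)
  finally show "F h = h \<bullet> (\<Sum>b\<in>Basis. F b *\<^sub>R b)" .
qed

lemma gderiv_exists:
  fixes F :: "'v::euclidean_space \<Rightarrow> real"
  assumes "F differentiable (at x)"
  shows "\<exists>D. GDERIV F x :> D"
proof -
  obtain F' where F': "(F has_derivative F') (at x)" using assms unfolding differentiable_def by blast
  have "linear F'" using F' has_derivative_linear by blast
  then have "F' = (\<lambda>h. h \<bullet> (\<Sum>b\<in>Basis. F' b *\<^sub>R b))" by (rule linear_gderiv_rep)
  then show ?thesis using F' unfolding gderiv_def by metis
qed

lemma nabla_eq:
  fixes F :: "'v::euclidean_space \<Rightarrow> real"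
  assumes "GDERIV F x :> D"
  shows "nabla F x = D"
  unfolding nabla_def
proof (rule the_equality)
  show "GDERIV F x :> D" by fact
  fix D' assume "GDERIV F x :> D'"
  then have "(\<lambda>h. h \<bullet> D') = (\<lambda>h. h \<bullet> D)" using assms unfolding gderiv_def
    by (rule has_derivative_unique)
  then have "(D' - D) \<bullet> D' = (D' - D) \<bullet> D" by metis
  then have "(D' - D) \<bullet> (D' - D) = 0" by (simp add: inner_diff_right)
  then show "D' = D" by simp
qed

lemma gderiv_nabla:
  fixes F :: "'v::euclidean_space \<Rightarrow> real"
  assumes "F differentiable (at x)"
  shows "GDERIV F x :> nabla F x"
  using gderiv_exists[OF assms] nabla_eq by metis

lemma gderiv_cmult_sum:
  fixes h :: "'i \<Rightarrow> 'v::euclidean_space \<Rightarrow> real"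
  assumes "\<And>i. i \<in> I \<Longrightarrow> GDERIV (h i) x :> D i"
  shows "GDERIV (\<lambda>y. c * (\<Sum>i\<in>I. h i y)) x :> c *\<^sub>R (\<Sum>i\<in>I. D i)"
proof -
  have "((\<lambda>y. \<Sum>i\<in>I. h i y) has_derivative (\<lambda>v. \<Sum>i\<in>I. v \<bullet> D i)) (at x)"
    using assms unfolding gderiv_def by (intro has_derivative_sum) auto
  then have "((\<lambda>y. c * (\<Sum>i\<in>I. h i y)) has_derivative (\<lambda>v. c * (\<Sum>i\<in>I. v \<bullet> D i))) (at x)"
    by (rule has_derivative_mult_right)
  moreover have "(\<lambda>v. c * (\<Sum>i\<in>I. v \<bullet> D i)) = (\<lambda>v. v \<bullet> (c *\<^sub>R (\<Sum>i\<in>I. D i)))"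
    by (simp add: inner_sum_right)
  ultimately show ?thesis unfolding gderiv_def by simp
qed

lemma differentiable_cmult_sum:
  fixes h :: "'i \<Rightarrow> 'v::euclidean_space \<Rightarrow> real"
  assumes "\<And>i. i \<in> I \<Longrightarrow> h i differentiable (at x)"
  shows "(\<lambda>y. c * (\<Sum>i\<in>I. h i y)) differentiable (at x)"
  using gderiv_cmult_sum[of I h x "\<lambda>i. nabla (h i) x" c] assms gderiv_nabla
  unfolding gderiv_def differentiable_def by blast



lemma measurable_PiM_kernel:
  assumes K: "\<And>i. i \<in> I \<Longrightarrow> K i \<in> N \<rightarrow>\<^sub>M prob_algebra (A i)"
  shows "(\<lambda>s. PiM I (\<lambda>i. K i s)) \<in> N \<rightarrow>\<^sub>M prob_algebra (PiM I A)"
proof (rule measurable_prob_algebra_generated[OF sets_PiM Int_stable_prod_algebra prod_algebra_sets_into_space])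
  fix s assume s: "s \<in> space N"
  have Ks: "i \<in> I \<Longrightarrow> prob_space (K i s) \<and> sets (K i s) = sets (A i)" for i
    using measurable_space[OF K s] by (auto simp: space_prob_algebra)
  show "prob_space (PiM I (\<lambda>i. K i s))"
    using Ks by (intro prob_space_PiM) auto
  show "sets (PiM I (\<lambda>i. K i s)) = sets (PiM I A)"
    using Ks by (intro sets_PiM_cong) auto
next
  fix X assume "X \<in> prod_algebra I A"
  then obtain J E where X: "X = prod_emb I A J (\<Pi>\<^sub>E j\<in>J. E j)"
    "finite J" "J \<subseteq> I" "\<And>i. i \<in> J \<Longrightarrow> E i \<in> sets (A i)"
    by (rule prod_algebraE) blast
  have "(\<lambda>s. \<Prod>j\<in>J. emeasure (K j s) (E j)) \<in> borel_measurable N"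
  proof (rule borel_measurable_prod_ennreal)
    fix j assume j: "j \<in> J"
    show "(\<lambda>s. emeasure (K j s) (E j)) \<in> borel_measurable N"
      using measurable_prob_algebraD[OF K] X j
      by (intro measurable_emeasure_kernel) auto
  qed
  moreover have "emeasure (PiM I (\<lambda>i. K i s)) X = (\<Prod>j\<in>J. emeasure (K j s) (E j))"
    if s: "s \<in> space N" for s
  proof -
    have Ks: "i \<in> I \<Longrightarrow> prob_space (K i s) \<and> sets (K i s) = sets (A i)" for i
      using measurable_space[OF K s] by (auto simp: space_prob_algebra)
    then have sp: "i \<in> I \<Longrightarrow> space (K i s) = space (A i)" for i
      by (metis sets_eq_imp_space_eq)
    have "X = prod_emb I (\<lambda>i. K i s) J (\<Pi>\<^sub>E j\<in>J. E j)"
      unfolding X(1) prod_emb_def using sp by (auto simp: PiE_iff)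
    then show ?thesis using X Ks
      by (simp add: emeasure_PiM_emb subset_iff)
  qed
  ultimately show "(\<lambda>s. emeasure (PiM I (\<lambda>i. K i s)) X) \<in> borel_measurable N"
    by (subst measurable_cong) auto
qed

lemma distr_PiM_pair:
  assumes M: "\<And>i. i \<in> I \<Longrightarrow> prob_space (M i)"
  assumes "i \<in> I" "l \<in> I" "i \<noteq> l"
  shows "distr (PiM I M) (M i \<Otimes>\<^sub>M M l) (\<lambda>q. (q i, q l)) = M i \<Otimes>\<^sub>M M l"
proof (rule pair_measure_eqI[symmetric])
  interpret Mi: prob_space "M i" using M assms by auto
  interpret Ml: prob_space "M l" using M assms by auto
  show "sigma_finite_measure (M i)" "sigma_finite_measure (M l)" by unfold_locales
  show "sets (M i \<Otimes>\<^sub>M M l) = sets (distr (PiM I M) (M i \<Otimes>\<^sub>M M l) (\<lambda>q. (q i, q l)))" by simp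
  fix A B assume A: "A \<in> sets (M i)" and B: "B \<in> sets (M l)"
  have meas: "(\<lambda>q. (q i, q l)) \<in> PiM I M \<rightarrow>\<^sub>M M i \<Otimes>\<^sub>M M l"
    using assms by measurable
  define E where "E = (\<lambda>j. if j = i then A else B)"
  have pre: "(\<lambda>q. (q i, q l)) -` (A \<times> B) \<inter> space (PiM I M) = prod_emb I M {i, l} (\<Pi>\<^sub>E j\<in>{i,l}. E j)"
    using assms by (auto simp: prod_emb_def space_PiM E_def PiE_iff)
  have "emeasure (distr (PiM I M) (M i \<Otimes>\<^sub>M M l) (\<lambda>q. (q i, q l))) (A \<times> B)
      = emeasure (PiM I M) (prod_emb I M {i, l} (\<Pi>\<^sub>E j\<in>{i,l}. E j))"
    using A B meas by (simp add: emeasure_distr pre)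
  also have "\<dots> = (\<Prod>j\<in>{i,l}. emeasure (M j) (E j))"
    using assms A B by (intro emeasure_PiM_emb M) (auto simp: E_def)
  also have "\<dots> = emeasure (M i) A * emeasure (M l) B"
    using assms by (simp add: E_def)
  finally show "emeasure (M i) A * emeasure (M l) B = emeasure (distr (PiM I M) (M i \<Otimes>\<^sub>M M l) (\<lambda>q. (q i, q l))) (A \<times> B)"
    by simp
qed



lemma norm_sq_split:
  fixes v m a :: "'v::real_inner"
  shows "(norm (v - a))\<^sup>2 = (norm (v - m))\<^sup>2 + 2 * ((v - m) \<bullet> (m - a)) + (norm (m - a))\<^sup>2"
proof -
  have gen: "(norm (x + y))\<^sup>2 = (norm x)\<^sup>2 + 2 * (x \<bullet> y) + (norm y)\<^sup>2" for x y :: 'v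
    by (simp add: power2_norm_eq_inner inner_add_left inner_add_right inner_commute[of y x])
  have "v - a = (v - m) + (m - a)" by simp
  then show ?thesis using gen[of "v - m" "m - a"] by metis
qed

lemma sq_decomp:
  fixes \<nu> :: "'v::euclidean_space measure"
  assumes P: "prob_space \<nu>" and S: "sets \<nu> = sets borel"
    and I: "integrable \<nu> (\<lambda>v. v)" and m: "(\<integral>v. v \<partial>\<nu>) = m"
    and F: "(\<integral>\<^sup>+v. ennreal ((norm (v - m))\<^sup>2) \<partial>\<nu>) < \<infinity>"
  shows "(\<integral>\<^sup>+v. ennreal ((norm (v - a))\<^sup>2) \<partial>\<nu>)
       = (\<integral>\<^sup>+v. ennreal ((norm (v - m))\<^sup>2) \<partial>\<nu>) + ennreal ((norm (m - a))\<^sup>2)"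
proof -
  interpret prob_space \<nu> by fact
  note S[measurable_cong]
  have ih: "integrable \<nu> (\<lambda>v. (norm (v - m))\<^sup>2)"
    using F by (subst integrable_iff_bounded) auto
  have il: "integrable \<nu> (\<lambda>v. (v - m) \<bullet> (m - a))"
    using I by (intro integrable_inner_left integrable_diff) auto
  have i0: "(\<integral>v. (v - m) \<bullet> (m - a) \<partial>\<nu>) = 0"
    using I m by (simp add: prob_space)
  have ia: "integrable \<nu> (\<lambda>v. (norm (v - a))\<^sup>2)"
    using Bochner_Integration.integrable_add[OF Bochner_Integration.integrable_add[OF ih integrable_mult_right[OF il, of 2]] integrable_const[of "(norm (m - a))\<^sup>2"]]
    by (subst norm_sq_split[of _ a m]) simp
  have "(\<integral>v. (norm (v - a))\<^sup>2 \<partial>\<nu>) = (\<integral>v. (norm (v - m))\<^sup>2 + 2 * ((v - m) \<bullet> (m - a)) + (norm (m - a))\<^sup>2 \<partial>\<nu>)"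
    by (subst norm_sq_split[of _ a m]) simp
  also have "\<dots> = (\<integral>v. (norm (v - m))\<^sup>2 \<partial>\<nu>) + (norm (m - a))\<^sup>2"
    using ih il i0 by (simp add: prob_space)
  finally have eq: "(\<integral>v. (norm (v - a))\<^sup>2 \<partial>\<nu>) = (\<integral>v. (norm (v - m))\<^sup>2 \<partial>\<nu>) + (norm (m - a))\<^sup>2" .
  have "(\<integral>\<^sup>+v. ennreal ((norm (v - a))\<^sup>2) \<partial>\<nu>) = ennreal (\<integral>v. (norm (v - a))\<^sup>2 \<partial>\<nu>)"
    using ia by (intro nn_integral_eq_integral) auto
  also have "\<dots> = ennreal (\<integral>v. (norm (v - m))\<^sup>2 \<partial>\<nu>) + ennreal ((norm (m - a))\<^sup>2)"
    unfolding eq by (intro ennreal_plus integral_nonneg_AE) auto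
  also have "ennreal (\<integral>v. (norm (v - m))\<^sup>2 \<partial>\<nu>) = (\<integral>\<^sup>+v. ennreal ((norm (v - m))\<^sup>2) \<partial>\<nu>)"
    using ih by (intro nn_integral_eq_integral[symmetric]) auto
  finally show ?thesis .
qed

lemma integrable_of_sq:
  fixes \<nu> :: "'v::euclidean_space measure"
  assumes P: "prob_space \<nu>" and S: "sets \<nu> = sets borel"
    and F: "(\<integral>\<^sup>+v. ennreal ((norm (v - a))\<^sup>2) \<partial>\<nu>) < \<infinity>"
  shows "integrable \<nu> (\<lambda>v. v)"
proof -
  interpret prob_space \<nu> by fact
  note S[measurable_cong]
  have "(\<integral>\<^sup>+v. ennreal (norm v) \<partial>\<nu>) \<le> (\<integral>\<^sup>+v. ennreal (norm a + 1) + ennreal ((norm (v - a))\<^sup>2) \<partial>\<nu>)"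
  proof (rule nn_integral_mono)
    fix v :: 'v
    have "norm v \<le> norm a + norm (v - a)" by (metis add.commute diff_add_cancel norm_triangle_ineq)
    also have "norm (v - a) \<le> 1 + (norm (v - a))\<^sup>2"
    proof (cases "norm (v - a) \<le> 1")
      case True then show ?thesis by (smt (verit) zero_le_power2)
    next
      case False
      then have "norm (v - a) * 1 \<le> norm (v - a) * norm (v - a)" by (intro mult_left_mono) auto
      then show ?thesis by (simp add: power2_eq_square)
    qed
    finally have "ennreal (norm v) \<le> ennreal (norm a + 1 + (norm (v - a))\<^sup>2)"
      by (intro ennreal_leI) simp
    also have "\<dots> = ennreal (norm a + 1) + ennreal ((norm (v - a))\<^sup>2)"
      by (rule ennreal_plus) auto
    finally show "ennreal (norm v) \<le> ennreal (norm a + 1) + ennreal ((norm (v - a))\<^sup>2)" .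
  qed
  also have "\<dots> = ennreal (norm a + 1) + (\<integral>\<^sup>+v. ennreal ((norm (v - a))\<^sup>2) \<partial>\<nu>)"
    by (subst nn_integral_add) (auto simp: emeasure_space_1)
  also have "\<dots> < \<infinity>" using F by simp
  finally show ?thesis by (subst integrable_iff_bounded) auto
qed



lemma mu_formula:
  fixes D :: "'v::euclidean_space measure" and Qd :: "'v \<Rightarrow> 'v measure"
  assumes PD: "prob_space D" and SD: "sets D = sets borel" and ID: "integrable D (\<lambda>v. v)"
    and mD: "(\<integral>v. v \<partial>D) = \<Delta>"
    and WD: "(\<integral>\<^sup>+v. ennreal ((norm (v - \<Delta>))\<^sup>2) \<partial>D) = ennreal W" and W0: "0 \<le> W"
    and Qm: "Qd \<in> borel \<rightarrow>\<^sub>M prob_algebra borel"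
    and QI: "\<And>u. integrable (Qd u) (\<lambda>v. v)" and Qmean: "\<And>u. (\<integral>v. v \<partial>Qd u) = u"
    and Qv: "\<And>u. (\<integral>\<^sup>+v. ennreal ((norm (v - u))\<^sup>2) \<partial>Qd u) \<le> ennreal (\<omega> * (norm u)\<^sup>2)"
    and \<omega>0: "0 \<le> \<omega>"
  shows "\<exists>C. 0 \<le> C \<and> C \<le> W + \<omega> * (W + (norm \<Delta>)\<^sup>2) \<and>
          (\<forall>a. (\<integral>\<^sup>+u. ennreal ((norm (u - a))\<^sup>2) \<partial>(D \<bind> Qd)) = ennreal (C + (norm (\<Delta> - a))\<^sup>2))"
proof -
  interpret D: prob_space D by fact
  note SD[measurable_cong]
  have Qu: "prob_space (Qd u) \<and> sets (Qd u) = sets borel" for u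
    using measurable_space[OF Qm, of u] by (auto simp: space_prob_algebra)
  define q where "q u = (\<integral>\<^sup>+v. ennreal ((norm (v - u))\<^sup>2) \<partial>Qd u)" for u
  have qfin: "q u < \<infinity>" for u using Qv[of u] unfolding q_def by (simp add: le_less_trans)
  have Qa: "(\<integral>\<^sup>+v. ennreal ((norm (v - a))\<^sup>2) \<partial>Qd u) = q u + ennreal ((norm (u - a))\<^sup>2)" for u a
    unfolding q_def using Qu[of u] QI[of u] Qmean[of u] qfin[of u]
    by (intro sq_decomp) (auto simp: q_def)
  have QmD: "Qd \<in> D \<rightarrow>\<^sub>M subprob_algebra borel"
    using measurable_prob_algebraD[OF Qm] by (simp cong: measurable_cong_sets)
  have qmeas: "q \<in> borel_measurable D"
    unfolding q_def
    by (rule nn_integral_measurable_subprob_algebra2[OF _ QmD]) measurable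
  have Wfin: "(\<integral>\<^sup>+v. ennreal ((norm (v - \<Delta>))\<^sup>2) \<partial>D) < \<infinity>" using WD by simp
  have Dsq: "(\<integral>\<^sup>+v. ennreal ((norm (v - a))\<^sup>2) \<partial>D) = ennreal (W + (norm (\<Delta> - a))\<^sup>2)" for a
    using sq_decomp[OF PD SD ID mD Wfin, of a] WD W0 by (simp add: ennreal_plus)
  have bind: "(\<integral>\<^sup>+u. ennreal ((norm (u - a))\<^sup>2) \<partial>(D \<bind> Qd)) = (\<integral>\<^sup>+u. q u \<partial>D) + ennreal (W + (norm (\<Delta> - a))\<^sup>2)" for a
  proof -
    have "(\<integral>\<^sup>+u. ennreal ((norm (u - a))\<^sup>2) \<partial>(D \<bind> Qd)) = (\<integral>\<^sup>+u. \<integral>\<^sup>+v. ennreal ((norm (v - a))\<^sup>2) \<partial>Qd u \<partial>D)"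
      by (rule nn_integral_bind[OF _ QmD]) measurable
    also have "\<dots> = (\<integral>\<^sup>+u. q u + ennreal ((norm (u - a))\<^sup>2) \<partial>D)" by (simp add: Qa)
    also have "\<dots> = (\<integral>\<^sup>+u. q u \<partial>D) + (\<integral>\<^sup>+u. ennreal ((norm (u - a))\<^sup>2) \<partial>D)"
      using qmeas by (intro nn_integral_add) auto
    finally show ?thesis using Dsq by simp
  qed
  have Qi_le: "(\<integral>\<^sup>+u. q u \<partial>D) \<le> ennreal (\<omega> * (W + (norm \<Delta>)\<^sup>2))"
  proof -
    have "(\<integral>\<^sup>+u. q u \<partial>D) \<le> (\<integral>\<^sup>+u. ennreal \<omega> * ennreal ((norm (u - 0))\<^sup>2) \<partial>D)"
      using Qv unfolding q_def by (intro nn_integral_mono) (simp add: ennreal_mult \<omega>0)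
    also have "\<dots> = ennreal \<omega> * (\<integral>\<^sup>+u. ennreal ((norm (u - 0))\<^sup>2) \<partial>D)"
      by (intro nn_integral_cmult) measurable
    also have "\<dots> = ennreal (\<omega> * (W + (norm \<Delta>)\<^sup>2))"
      unfolding Dsq using \<omega>0 W0 by (simp add: ennreal_mult)
    finally show ?thesis .
  qed
  define C where "C = enn2real (\<integral>\<^sup>+u. q u \<partial>D) + W"
  have Qi_eq: "(\<integral>\<^sup>+u. q u \<partial>D) = ennreal (enn2real (\<integral>\<^sup>+u. q u \<partial>D))"
    using Qi_le by (intro ennreal_enn2real[symmetric]) (meson ennreal_less_top le_less_trans)
  have Qi_le': "enn2real (\<integral>\<^sup>+u. q u \<partial>D) \<le> \<omega> * (W + (norm \<Delta>)\<^sup>2)"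
  proof -
    have "enn2real (\<integral>\<^sup>+u. q u \<partial>D) \<le> enn2real (ennreal (\<omega> * (W + (norm \<Delta>)\<^sup>2)))"
      by (rule enn2real_mono[OF Qi_le]) simp
    also have "\<dots> = \<omega> * (W + (norm \<Delta>)\<^sup>2)"
      by (rule enn2real_ennreal) (simp add: \<omega>0 W0)
    finally show ?thesis .
  qed
  show ?thesis
  proof (intro exI conjI allI)
    show "0 \<le> C" unfolding C_def using W0 by simp
    show "C \<le> W + \<omega> * (W + (norm \<Delta>)\<^sup>2)" unfolding C_def using Qi_le' by simp
    fix a
    show "(\<integral>\<^sup>+u. ennreal ((norm (u - a))\<^sup>2) \<partial>(D \<bind> Qd)) = ennreal (C + (norm (\<Delta> - a))\<^sup>2)"
    proof -
      have "ennreal (C + (norm (\<Delta> - a))\<^sup>2) = ennreal (enn2real (\<integral>\<^sup>+u. q u \<partial>D)) + ennreal (W + (norm (\<Delta> - a))\<^sup>2)"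
        unfolding C_def add.assoc using W0 by (intro ennreal_plus) auto
      then show ?thesis unfolding bind using Qi_eq by simp
    qed
  qed
qed



lemma pair_sum_norm:
  fixes a :: "'i \<Rightarrow> 'v::real_inner"
  assumes "finite I"
  shows "(\<Sum>i\<in>I. \<Sum>l\<in>I. (norm (a i - a l))\<^sup>2) = 2 * real (card I) * (\<Sum>i\<in>I. (norm (a i))\<^sup>2) - 2 * (norm (\<Sum>i\<in>I. a i))\<^sup>2"
proof -
  have e: "(norm (a i - a l))\<^sup>2 = (norm (a i))\<^sup>2 + (norm (a l))\<^sup>2 - 2 * (a i \<bullet> a l)" for i l
    by (simp add: power2_norm_eq_inner inner_diff_left inner_diff_right inner_commute[of "a l" "a i"])
  have s: "(\<Sum>i\<in>I. \<Sum>l\<in>I. a i \<bullet> a l) = (norm (\<Sum>i\<in>I. a i))\<^sup>2"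
    by (simp add: power2_norm_eq_inner inner_sum_left inner_sum_right) (rule sum.swap)
  have "(\<Sum>i\<in>I. \<Sum>l\<in>I. (norm (a i - a l))\<^sup>2)
      = (\<Sum>i\<in>I. \<Sum>l\<in>I. (norm (a i))\<^sup>2) + (\<Sum>i\<in>I. \<Sum>l\<in>I. (norm (a l))\<^sup>2) - 2 * (\<Sum>i\<in>I. \<Sum>l\<in>I. a i \<bullet> a l)"
    unfolding e by (simp add: sum.distrib sum_subtractf sum_distrib_left)
  also have "\<dots> = 2 * real (card I) * (\<Sum>i\<in>I. (norm (a i))\<^sup>2) - 2 * (norm (\<Sum>i\<in>I. a i))\<^sup>2"
    unfolding s by (simp add: sum_distrib_left[symmetric] mult.commute)
  finally show ?thesis .
qed

lemma pair_sum_offdiag: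
  fixes Y :: "'i \<Rightarrow> real"
  assumes fin: "finite I" and z: "\<And>i. z i i = 0"
  shows "(\<Sum>i\<in>I. \<Sum>l\<in>I. if i = l then 0 else Y i + Y l + z i l)
       = 2 * (real (card I) - 1) * (\<Sum>i\<in>I. Y i) + (\<Sum>i\<in>I. \<Sum>l\<in>I. z i l)"
proof -
  have e: "(if i = l then 0 else Y i + Y l + z i l) = (Y i + (Y l + z i l)) - (if i = l then 2 * Y i else 0)" for i l
    using z by auto
  have d: "(\<Sum>l\<in>I. if i = l then 2 * Y i else 0) = (if i \<in> I then 2 * Y i else 0)" for i
    using fin by (simp add: sum.delta)
  have "(\<Sum>i\<in>I. \<Sum>l\<in>I. if i = l then 0 else Y i + Y l + z i l)
      = (\<Sum>i\<in>I. real (card I) * Y i + ((\<Sum>l\<in>I. Y l) + (\<Sum>l\<in>I. z i l)) - 2 * Y i)"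
    unfolding e sum_subtractf d sum.distrib by (simp cong: sum.cong)
  also have "\<dots> = real (card I) * (\<Sum>i\<in>I. Y i) + (real (card I) * (\<Sum>i\<in>I. Y i) + (\<Sum>i\<in>I. \<Sum>l\<in>I. z i l)) - 2 * (\<Sum>i\<in>I. Y i)"
    unfolding sum_subtractf sum.distrib sum_distrib_left by (simp add: sum_distrib_left)
  also have "\<dots> = 2 * (real (card I) - 1) * (\<Sum>i\<in>I. Y i) + (\<Sum>i\<in>I. \<Sum>l\<in>I. z i l)"
    by (simp add: algebra_simps)
  finally show ?thesis .
qed



lemma c0_arith:
  fixes g w L2 P2 c2 d2 S Db2 SC SW :: real
  assumes g: "g \<ge> 2" and w: "w \<ge> 0" and c2: "c2 \<ge> 0" and d2: "d2 \<ge> 0" and L2: "L2 \<ge> 0" and P2: "P2 \<ge> 0"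
    and SC: "SC \<le> (1 + w) * SW + w * S" and SW: "SW \<le> g * c2 * d2"
    and A3: "(1 / g) * S - Db2 \<le> P2 * d2" and A1: "Db2 \<le> L2 * d2" and Db: "Db2 \<ge> 0"
  shows "2 * (g - 1) * SC + 2 * g * S - 2 * g\<^sup>2 * Db2 \<le> g * (g - 1) * (4 * (w * L2 + (1 + w) * P2 + (1 + w) * c2)) * d2"
proof -
  define X where "X = S - g * Db2"
  have "g * ((1 / g) * S - Db2) \<le> g * (P2 * d2)" using A3 g by (intro mult_left_mono) auto
  then have X: "X \<le> g * P2 * d2" unfolding X_def using g by (simp add: algebra_simps)
  have S: "S = X + g * Db2" unfolding X_def by simp
  have "2 * (g - 1) * SC \<le> 2 * (g - 1) * ((1 + w) * SW + w * S)" using SC g by (intro mult_left_mono) auto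
  also have "\<dots> \<le> 2 * (g - 1) * ((1 + w) * (g * c2 * d2) + w * S)"
    using SW g w by (intro mult_left_mono add_mono) auto
  finally have h1: "2 * (g - 1) * SC \<le> 2 * (g - 1) * ((1 + w) * (g * c2 * d2) + w * S)" .
  have lhs: "2 * (g - 1) * ((1 + w) * (g * c2 * d2) + w * S) + 2 * g * S - 2 * g\<^sup>2 * Db2
       = 2 * (g - 1) * (1 + w) * g * c2 * d2 + (2 * (g - 1) * w * g) * Db2 + (2 * (g - 1) * w + 2 * g) * X"
    unfolding S by (simp add: algebra_simps power2_eq_square)
  have t1: "(2 * (g - 1) * w * g) * Db2 \<le> (2 * (g - 1) * w * g) * (L2 * d2)"
    using A1 g w by (intro mult_left_mono) auto
  have t2: "(2 * (g - 1) * w + 2 * g) * X \<le> (2 * (g - 1) * w + 2 * g) * (g * P2 * d2)"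
    using X g w by (intro mult_left_mono) auto
  have fin: "2 * (g - 1) * (1 + w) * g * c2 * d2 + (2 * (g - 1) * w * g) * (L2 * d2) + (2 * (g - 1) * w + 2 * g) * (g * P2 * d2)
      \<le> g * (g - 1) * (4 * (w * L2 + (1 + w) * P2 + (1 + w) * c2)) * d2"
  proof -
    have "g * (g - 1) * (4 * (w * L2 + (1 + w) * P2 + (1 + w) * c2)) * d2
        - (2 * (g - 1) * (1 + w) * g * c2 * d2 + (2 * (g - 1) * w * g) * (L2 * d2) + (2 * (g - 1) * w + 2 * g) * (g * P2 * d2))
        = (2 * g * (g - 1) * (1 + w) * c2 * d2) + (2 * g * (g - 1) * w * L2 * d2) + (2 * g * (g - 2) + 2 * g * (g - 1) * w) * P2 * d2"
      by (simp add: algebra_simps power2_eq_square)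
    also have "\<dots> \<ge> 0" using g w c2 d2 L2 P2 by (intro add_nonneg_nonneg mult_nonneg_nonneg) auto
    finally show ?thesis by simp
  qed
  show ?thesis using h1 lhs t1 t2 fin by linarith
qed



lemma c0_sum:
  fixes \<mu> :: "nat \<Rightarrow> 'v::euclidean_space measure"
  assumes fin: "finite I"
    and P: "\<And>i. i \<in> I \<Longrightarrow> prob_space (\<mu> i)" and S: "\<And>i. i \<in> I \<Longrightarrow> sets (\<mu> i) = sets borel"
    and C0: "\<And>i. i \<in> I \<Longrightarrow> 0 \<le> Cr i"
    and form: "\<And>i a. i \<in> I \<Longrightarrow> (\<integral>\<^sup>+u. ennreal ((norm (u - a))\<^sup>2) \<partial>\<mu> i) = ennreal (Cr i + (norm (\<Delta> i - a))\<^sup>2)"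
  shows "(\<Sum>i\<in>I. \<Sum>l\<in>I. \<integral>\<^sup>+q. ennreal ((norm (q i - q l))\<^sup>2) \<partial>PiM I \<mu>)
       = ennreal (\<Sum>i\<in>I. \<Sum>l\<in>I. if i = l then 0 else Cr i + Cr l + (norm (\<Delta> i - \<Delta> l))\<^sup>2)"
proof -
  have trm: "(\<integral>\<^sup>+q. ennreal ((norm (q i - q l))\<^sup>2) \<partial>PiM I \<mu>)
      = ennreal (if i = l then 0 else Cr i + Cr l + (norm (\<Delta> i - \<Delta> l))\<^sup>2)" if il: "i \<in> I" "l \<in> I" for i l
  proof (cases "i = l")
    case True then show ?thesis by simp
  next
    case False
    interpret Mi: prob_space "\<mu> i" using P il by auto
    interpret Ml: prob_space "\<mu> l" using P il by auto
    interpret pair_sigma_finite "\<mu> i" "\<mu> l" ..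
    note S[OF il(1), measurable_cong] S[OF il(2), measurable_cong]
    have meas: "(\<lambda>q. (q i, q l)) \<in> PiM I \<mu> \<rightarrow>\<^sub>M \<mu> i \<Otimes>\<^sub>M \<mu> l" using il by measurable
    have "(\<integral>\<^sup>+q. ennreal ((norm (q i - q l))\<^sup>2) \<partial>PiM I \<mu>)
        = (\<integral>\<^sup>+z. ennreal ((norm (fst z - snd z))\<^sup>2) \<partial>distr (PiM I \<mu>) (\<mu> i \<Otimes>\<^sub>M \<mu> l) (\<lambda>q. (q i, q l)))"
      by (subst nn_integral_distr[OF meas]) (simp_all)
    also have "\<dots> = (\<integral>\<^sup>+z. ennreal ((norm (fst z - snd z))\<^sup>2) \<partial>(\<mu> i \<Otimes>\<^sub>M \<mu> l))"
      using distr_PiM_pair[of I \<mu> i l, OF P il False] by simp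
    also have "\<dots> = (\<integral>\<^sup>+u. \<integral>\<^sup>+v. ennreal ((norm (u - v))\<^sup>2) \<partial>\<mu> l \<partial>\<mu> i)"
      by (subst Ml.nn_integral_fst[symmetric]) simp_all
    also have "\<dots> = (\<integral>\<^sup>+u. ennreal (Cr l) + ennreal ((norm (u - \<Delta> l))\<^sup>2) \<partial>\<mu> i)"
    proof (rule nn_integral_cong)
      fix u
      have "(\<integral>\<^sup>+v. ennreal ((norm (u - v))\<^sup>2) \<partial>\<mu> l) = (\<integral>\<^sup>+v. ennreal ((norm (v - u))\<^sup>2) \<partial>\<mu> l)"
        by (simp add: norm_minus_commute)
      also have "\<dots> = ennreal (Cr l + (norm (\<Delta> l - u))\<^sup>2)" using form il by simp
      also have "\<dots> = ennreal (Cr l) + ennreal ((norm (u - \<Delta> l))\<^sup>2)"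
        using C0 il by (simp add: ennreal_plus norm_minus_commute)
      finally show "(\<integral>\<^sup>+v. ennreal ((norm (u - v))\<^sup>2) \<partial>\<mu> l) = ennreal (Cr l) + ennreal ((norm (u - \<Delta> l))\<^sup>2)" .
    qed
    also have "\<dots> = ennreal (Cr l) + (\<integral>\<^sup>+u. ennreal ((norm (u - \<Delta> l))\<^sup>2) \<partial>\<mu> i)"
      by (subst nn_integral_add) (simp_all add: Mi.emeasure_space_1)
    also have "\<dots> = ennreal (Cr l) + ennreal (Cr i + (norm (\<Delta> i - \<Delta> l))\<^sup>2)" using form il by simp
    also have "\<dots> = ennreal (Cr i + Cr l + (norm (\<Delta> i - \<Delta> l))\<^sup>2)"
    proof -
      have "ennreal (Cr l) + ennreal (Cr i + (norm (\<Delta> i - \<Delta> l))\<^sup>2) = ennreal (Cr l + (Cr i + (norm (\<Delta> i - \<Delta> l))\<^sup>2))"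
        using C0 il by (intro ennreal_plus[symmetric]) auto
      also have "Cr l + (Cr i + (norm (\<Delta> i - \<Delta> l))\<^sup>2) = Cr i + Cr l + (norm (\<Delta> i - \<Delta> l))\<^sup>2" by simp
      finally show ?thesis .
    qed
    finally show ?thesis using False by simp
  qed
  have "(\<Sum>i\<in>I. \<Sum>l\<in>I. \<integral>\<^sup>+q. ennreal ((norm (q i - q l))\<^sup>2) \<partial>PiM I \<mu>)
      = (\<Sum>i\<in>I. \<Sum>l\<in>I. ennreal (if i = l then 0 else Cr i + Cr l + (norm (\<Delta> i - \<Delta> l))\<^sup>2))"
    using trm by (intro sum.cong) auto
  also have "\<dots> = ennreal (\<Sum>i\<in>I. \<Sum>l\<in>I. if i = l then 0 else Cr i + Cr l + (norm (\<Delta> i - \<Delta> l))\<^sup>2)"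
  proof -
    have nn: "i \<in> I \<Longrightarrow> l \<in> I \<Longrightarrow> 0 \<le> (if i = l then 0 else Cr i + Cr l + (norm (\<Delta> i - \<Delta> l))\<^sup>2)" for i l
      using C0 by auto
    have "(\<Sum>i\<in>I. \<Sum>l\<in>I. ennreal (if i = l then 0 else Cr i + Cr l + (norm (\<Delta> i - \<Delta> l))\<^sup>2))
        = (\<Sum>i\<in>I. ennreal (\<Sum>l\<in>I. if i = l then 0 else Cr i + Cr l + (norm (\<Delta> i - \<Delta> l))\<^sup>2))"
      using nn by (intro sum.cong refl sum_ennreal) auto
    also have "\<dots> = ennreal (\<Sum>i\<in>I. \<Sum>l\<in>I. if i = l then 0 else Cr i + Cr l + (norm (\<Delta> i - \<Delta> l))\<^sup>2)"
      using nn by (intro sum_ennreal sum_nonneg) auto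
    finally show ?thesis .
  qed
  finally show ?thesis .
qed


lemma sum2_ennreal:
  assumes "\<And>i l. i \<in> I \<Longrightarrow> l \<in> I \<Longrightarrow> 0 \<le> h i l"
  shows "(\<Sum>i\<in>I. \<Sum>l\<in>I. ennreal (h i l)) = ennreal (\<Sum>i\<in>I. \<Sum>l\<in>I. h i l)"
proof -
  have "(\<Sum>i\<in>I. \<Sum>l\<in>I. ennreal (h i l)) = (\<Sum>i\<in>I. ennreal (\<Sum>l\<in>I. h i l))"
    using assms by (intro sum.cong refl sum_ennreal) auto
  also have "\<dots> = ennreal (\<Sum>i\<in>I. \<Sum>l\<in>I. h i l)"
    using assms by (intro sum_ennreal sum_nonneg) auto
  finally show ?thesis .
qed

lemma frac_G_le:
  fixes g :: real assumes "g \<ge> 2" "0 \<le> a"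
  shows "a * g\<^sup>2 / (g * (g - 1)) \<le> 2 * a"
proof -
  have "a * g\<^sup>2 / (g * (g - 1)) = a * g / (g - 1)" using assms by (simp add: power2_eq_square)
  also have "\<dots> \<le> 2 * a" using assms by (simp add: divide_le_eq algebra_simps mult_left_mono)
  finally show ?thesis .
qed


theorem mainTheorem3:
  fixes n m b :: nat
    and Gs :: "nat set"
    and \<delta> L B \<zeta> Lpm cLpm \<omega> \<gamma> p :: real
    and fij :: "nat \<Rightarrow> nat \<Rightarrow> 'v::euclidean_space \<Rightarrow> real"
    and fi :: "nat \<Rightarrow> 'v \<Rightarrow> real"
    and f :: "'v \<Rightarrow> real"
    and Dh :: "nat \<Rightarrow> 'v \<Rightarrow> 'v \<Rightarrow> 'v measure"
    and Qd :: "'v \<Rightarrow> 'v measure"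
    and ARAgg :: "(nat \<Rightarrow> 'v) \<Rightarrow> 'v"
    and M :: "'a measure"
    and x0 :: 'v
    and x g :: "nat \<Rightarrow> 'a \<Rightarrow> 'v"
    and c :: "nat \<Rightarrow> 'a \<Rightarrow> bool"
    and qv :: "nat \<Rightarrow> 'a \<Rightarrow> nat \<Rightarrow> 'v"
    and gi :: "nat \<Rightarrow> nat \<Rightarrow> 'a \<Rightarrow> 'v"
    and k :: nat
  defines "G \<equiv> card Gs"
  assumes workers: "Gs \<subseteq> {1..n}" "G \<ge> 2"
      "0 \<le> \<delta>" "\<delta> < 1/2" "real (card ({1..n} - Gs)) \<le> \<delta> * real n"
    \<comment> \<open>local functions f_i = (1/m) sum_j f_{i,j}, with f_{i,j} differentiable; f = average\<close>
    and m_pos: "m \<ge> 1"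
    and fij_diff: "\<And>i j y. i \<in> Gs \<Longrightarrow> j \<in> {1..m} \<Longrightarrow> fij i j differentiable (at y)"
    and fi_def: "\<And>i y. i \<in> Gs \<Longrightarrow> fi i y = (1 / real m) * (\<Sum>j\<in>{1..m}. fij i j y)"
    and f_def: "\<And>y. f y = (1 / real G) * (\<Sum>i\<in>Gs. fi i y)"
    \<comment> \<open>(A1)\<close>
    and A1_smooth: "\<And>y z. norm (nabla f y - nabla f z) \<le> L * norm (y - z)"
    and A1_bdd: "bdd_below (range f)"
    \<comment> \<open>(A2)\<close>
    and A2: "B \<ge> 0" "\<zeta> \<ge> 0"
      "\<And>y. (1 / real G) * (\<Sum>i\<in>Gs. (norm (nabla (fi i) y - nabla f y))\<^sup>2)
              \<le> B * (norm (nabla f y))\<^sup>2 + \<zeta>\<^sup>2"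
    \<comment> \<open>(A3)\<close>
    and A3: "Lpm \<ge> 0"
      "\<And>y z. (1 / real G) * (\<Sum>i\<in>Gs. (norm (nabla (fi i) y - nabla (fi i) z))\<^sup>2)
                 - (norm (nabla f y - nabla f z))\<^sup>2 \<le> Lpm\<^sup>2 * (norm (y - z))\<^sup>2"
    \<comment> \<open>(A4): Dh i y z is the law of the random vector \<Delta>-hat_i(y,z)\<close>
    and A4: "b \<ge> 1" "cLpm \<ge> 0"
      "\<And>i. i \<in> Gs \<Longrightarrow> (\<lambda>(y, z). Dh i y z) \<in> borel \<rightarrow>\<^sub>M prob_algebra borel"
      "\<And>i y z. i \<in> Gs \<Longrightarrow> integrable (Dh i y z) (\<lambda>v. v)"
      "\<And>i y z. i \<in> Gs \<Longrightarrow> (\<integral>v. v \<partial>Dh i y z) = nabla (fi i) y - nabla (fi i) z"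
      "\<And>y z. (1 / real G) * (\<Sum>i\<in>Gs. \<integral>\<^sup>+v. ennreal ((norm (v - (nabla (fi i) y - nabla (fi i) z)))\<^sup>2) \<partial>Dh i y z)
               \<le> ennreal (cLpm\<^sup>2 / real b * (norm (y - z))\<^sup>2)"
    \<comment> \<open>compressor: Qd u is the law of Q(u)\<close>
    and Qcomp: "\<omega> \<ge> 0" "Qd \<in> borel \<rightarrow>\<^sub>M prob_algebra borel"
      "\<And>u. integrable (Qd u) (\<lambda>v. v)"
      "\<And>u. (\<integral>v. v \<partial>Qd u) = u"
      "\<And>u. (\<integral>\<^sup>+v. ennreal ((norm (v - u))\<^sup>2) \<partial>Qd u) \<le> ennreal (\<omega> * (norm u)\<^sup>2)"
    \<comment> \<open>algorithm parameters\<close>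
    and params: "\<gamma> > 0" "0 < p" "p \<le> 1"
    \<comment> \<open>the process Byz-VR-MARINA on the probability space M\<close>
    and probM: "prob_space M"
    and meas: "\<And>j. x j \<in> borel_measurable M" "\<And>j. g j \<in> borel_measurable M"
      "\<And>j. c j \<in> measurable M (count_space UNIV)"
      "\<And>j i. (\<lambda>\<omega>'. qv j \<omega>' i) \<in> borel_measurable M"
      "\<And>j i. gi j i \<in> borel_measurable M"
    and start: "\<And>\<omega>'. x 0 \<omega>' = x0"
    and step_x: "\<And>j \<omega>'. x (Suc j) \<omega>' = x j \<omega>' - \<gamma> *\<^sub>R g j \<omega>'"
    and step_good: "\<And>j i \<omega>'. i \<in> Gs \<Longrightarrow>
        gi (Suc j) i \<omega>' = (if c j \<omega>' then nabla (fi i) (x (Suc j) \<omega>') else g j \<omega>' + qv j \<omega>' i)"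
    and step_agg: "\<And>j \<omega>'. g (Suc j) \<omega>' = ARAgg (\<lambda>i. gi (Suc j) i \<omega>')"
    \<comment> \<open>fresh randomness: given (x^j, g^j), c_j ~ Bernoulli(p) and the compressed estimators
        Q(\<Delta>-hat_i(x^{j+1}, x^j)), i in Gs, are mutually independent with the prescribed laws\<close>
    and fresh: "\<And>j. distr M (borel \<Otimes>\<^sub>M borel \<Otimes>\<^sub>M count_space UNIV \<Otimes>\<^sub>M PiM Gs (\<lambda>_. borel))
                       (\<lambda>\<omega>'. (x j \<omega>', g j \<omega>', c j \<omega>', restrict (qv j \<omega>') Gs))
        = distr M (borel \<Otimes>\<^sub>M borel) (\<lambda>\<omega>'. (x j \<omega>', g j \<omega>')) \<bind>
          (\<lambda>s. distr (measure_pmf (bernoulli_pmf p) \<Otimes>\<^sub>M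
                        PiM Gs (\<lambda>i. Dh i (fst s - \<gamma> *\<^sub>R snd s) (fst s) \<bind> Qd))
                  (borel \<Otimes>\<^sub>M borel \<Otimes>\<^sub>M count_space UNIV \<Otimes>\<^sub>M PiM Gs (\<lambda>_. borel))
                  (\<lambda>(cc, q). (fst s, snd s, cc, q)))"
  shows "ennreal (1 / (real G * (real G - 1))) *
           (\<Sum>i\<in>Gs. \<Sum>l\<in>Gs. \<integral>\<^sup>+\<omega>'. ennreal ((norm (gi (Suc k) i \<omega>' - gi (Suc k) l \<omega>'))\<^sup>2) \<partial>M)
         \<le> ennreal (8 * B * p * L\<^sup>2 + 4 * (1 - p) * (\<omega> * L\<^sup>2 + (1 + \<omega>) * Lpm\<^sup>2
                                               + (1 + \<omega>) * cLpm\<^sup>2 / real b))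
             * (\<integral>\<^sup>+\<omega>'. ennreal ((norm (x (Suc k) \<omega>' - x k \<omega>'))\<^sup>2) \<partial>M)
           + ennreal (8 * B * p) * (\<integral>\<^sup>+\<omega>'. ennreal ((norm (nabla f (x k \<omega>')))\<^sup>2) \<partial>M)
           + ennreal (4 * p * \<zeta>\<^sup>2)"
proof -
  have finGs: "finite Gs" using workers(1) finite_subset by blast
  have G2: "real G \<ge> 2" using workers(2) by simp
  have Gpos: "real G > 0" using G2 by simp
  have Gcard: "card Gs = G" by (simp add: G_def)
  have fi_eq: "fi i = (\<lambda>y. (1 / real m) * (\<Sum>j\<in>{1..m}. fij i j y))" if "i \<in> Gs" for i
    using fi_def that by auto
  have fi_diff: "fi i differentiable (at y)" if "i \<in> Gs" for i y
    unfolding fi_eq[OF that] by (rule differentiable_cmult_sum) (use fij_diff that in auto)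
  have f_eq: "f = (\<lambda>y. (1 / real G) * (\<Sum>i\<in>Gs. fi i y))" using f_def by auto
  have nabla_f: "nabla f y = (1 / real G) *\<^sub>R (\<Sum>i\<in>Gs. nabla (fi i) y)" for y
  proof -
    have "GDERIV f y :> (1 / real G) *\<^sub>R (\<Sum>i\<in>Gs. nabla (fi i) y)"
      unfolding f_eq by (rule gderiv_cmult_sum) (rule gderiv_nabla[OF fi_diff])
    then show ?thesis by (rule nabla_eq)
  qed
  have sum_nabla: "(\<Sum>i\<in>Gs. nabla (fi i) y) = real G *\<^sub>R nabla f y" for y
    using Gpos by (simp add: nabla_f)
  have nf_cont: "continuous_on UNIV (nabla f)"
  proof (rule lipschitz_on_continuous_on)
    show "\<bar>L\<bar>-lipschitz_on UNIV (nabla f)"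
    proof (rule lipschitz_onI)
      fix y z :: 'v
      have "norm (nabla f y - nabla f z) \<le> L * norm (y - z)" by (rule A1_smooth)
      also have "\<dots> \<le> \<bar>L\<bar> * norm (y - z)" by (intro mult_right_mono) auto
      finally show "dist (nabla f y) (nabla f z) \<le> \<bar>L\<bar> * dist y z" by (simp add: dist_norm)
    qed simp
  qed
  have nf_meas[measurable]: "nabla f \<in> borel_measurable borel"
    by (rule borel_measurable_continuous_onI[OF nf_cont])
  have A1sq: "(norm (nabla f y - nabla f z))\<^sup>2 \<le> L\<^sup>2 * (norm (y - z))\<^sup>2" for y z
  proof -
    have "norm (nabla f y - nabla f z) \<le> L * norm (y - z)" by (rule A1_smooth)
    then have "(norm (nabla f y - nabla f z))\<^sup>2 \<le> (L * norm (y - z))\<^sup>2"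
      by (intro power_mono) auto
    then show ?thesis by (simp add: power_mult_distrib)
  qed
  have c1: "(\<Sum>i\<in>Gs. \<Sum>l\<in>Gs. (norm (nabla (fi i) y - nabla (fi l) y))\<^sup>2)
      \<le> 2 * (real G)\<^sup>2 * (2 * B * (norm (nabla f z))\<^sup>2 + 2 * B * L\<^sup>2 * (norm (y - z))\<^sup>2 + \<zeta>\<^sup>2)" for y z
  proof -
    define a where "a i = nabla (fi i) y - nabla f y" for i
    have "(\<Sum>i\<in>Gs. \<Sum>l\<in>Gs. (norm (nabla (fi i) y - nabla (fi l) y))\<^sup>2) = (\<Sum>i\<in>Gs. \<Sum>l\<in>Gs. (norm (a i - a l))\<^sup>2)"
      by (simp add: a_def)
    also have "\<dots> = 2 * real G * (\<Sum>i\<in>Gs. (norm (a i))\<^sup>2) - 2 * (norm (\<Sum>i\<in>Gs. a i))\<^sup>2"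
      using pair_sum_norm[OF finGs, of a] Gcard by simp
    also have "(\<Sum>i\<in>Gs. a i) = 0"
      unfolding a_def sum_subtractf sum_nabla using Gcard by (simp add: sum_constant_scaleR)
    finally have e: "(\<Sum>i\<in>Gs. \<Sum>l\<in>Gs. (norm (nabla (fi i) y - nabla (fi l) y))\<^sup>2) = 2 * real G * (\<Sum>i\<in>Gs. (norm (a i))\<^sup>2)"
      by simp
    have "real G * ((1 / real G) * (\<Sum>i\<in>Gs. (norm (a i))\<^sup>2)) \<le> real G * (B * (norm (nabla f y))\<^sup>2 + \<zeta>\<^sup>2)"
      using A2(3)[of y] Gpos unfolding a_def by (intro mult_left_mono) auto
    then have sa: "(\<Sum>i\<in>Gs. (norm (a i))\<^sup>2) \<le> real G * (B * (norm (nabla f y))\<^sup>2 + \<zeta>\<^sup>2)"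
      using Gpos by simp
    have ny: "(norm (nabla f y))\<^sup>2 \<le> 2 * (norm (nabla f z))\<^sup>2 + 2 * L\<^sup>2 * (norm (y - z))\<^sup>2"
    proof -
      have "norm (nabla f y) \<le> norm (nabla f z) + norm (nabla f y - nabla f z)"
        by (metis add.commute diff_add_cancel norm_triangle_ineq)
      then have "(norm (nabla f y))\<^sup>2 \<le> (norm (nabla f z) + norm (nabla f y - nabla f z))\<^sup>2"
        by (intro power_mono) auto
      also have "\<dots> \<le> 2 * (norm (nabla f z))\<^sup>2 + 2 * (norm (nabla f y - nabla f z))\<^sup>2"
        by (smt (verit, best) sum_squares_bound zero_le_power2 power2_sum)
      finally show ?thesis using A1sq[of y z] by simp
    qed
    have "B * (norm (nabla f y))\<^sup>2 \<le> B * (2 * (norm (nabla f z))\<^sup>2 + 2 * L\<^sup>2 * (norm (y - z))\<^sup>2)"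
      using ny A2(1) by (intro mult_left_mono) auto
    then have "2 * real G * (\<Sum>i\<in>Gs. (norm (a i))\<^sup>2) \<le> 2 * real G * (real G * (B * (2 * (norm (nabla f z))\<^sup>2 + 2 * L\<^sup>2 * (norm (y - z))\<^sup>2) + \<zeta>\<^sup>2))"
      using sa Gpos by (intro mult_left_mono order_trans[OF sa] ) auto
    then show ?thesis unfolding e by (simp add: algebra_simps power2_eq_square)
  qed
  define K where "K = 4 * (\<omega> * L\<^sup>2 + (1 + \<omega>) * Lpm\<^sup>2 + (1 + \<omega>) * cLpm\<^sup>2 / real b)"
  have K0: "0 \<le> K" unfolding K_def using Qcomp(1) A4(1) by (intro mult_nonneg_nonneg add_nonneg_nonneg) auto
  define P where "P s = PiM Gs (\<lambda>i. Dh i (fst s - \<gamma> *\<^sub>R snd s) (fst s) \<bind> Qd)" for s :: "'v \<times> 'v"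
  have Dh_sp: "prob_space (Dh i y z) \<and> sets (Dh i y z) = sets borel" if "i \<in> Gs" for i y z
    using measurable_space[OF A4(3)[OF that], of "(y, z)"] by (auto simp: space_prob_algebra)
  have Dh_in: "Dh i y z \<in> space (prob_algebra borel)" if "i \<in> Gs" for i y z
    using Dh_sp[OF that] by (simp add: space_prob_algebra)
  have mu_sp: "prob_space (Dh i y z \<bind> Qd) \<and> sets (Dh i y z \<bind> Qd) = sets borel" if "i \<in> Gs" for i y z
    using prob_space_bind'[OF Dh_in[OF that] Qcomp(2)] sets_bind'[OF Dh_in[OF that] Qcomp(2)] by simp
  have c0: "(\<Sum>i\<in>Gs. \<Sum>l\<in>Gs. \<integral>\<^sup>+q. ennreal ((norm (q i - q l))\<^sup>2) \<partial>P s)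
      \<le> ennreal (real G * (real G - 1) * K * (norm (\<gamma> *\<^sub>R snd s))\<^sup>2)" for s
  proof -
    obtain a bb where s: "s = (a, bb)" by (cases s)
    define y where "y = a - \<gamma> *\<^sub>R bb"
    have ya: "norm (y - a) = norm (\<gamma> *\<^sub>R snd s)" by (simp add: y_def s)
    define \<Delta> where "\<Delta> i = nabla (fi i) y - nabla (fi i) a" for i
    define We where "We i = (\<integral>\<^sup>+v. ennreal ((norm (v - \<Delta> i))\<^sup>2) \<partial>Dh i y a)" for i
    have A4': "ennreal (1 / real G) * (\<Sum>i\<in>Gs. We i) \<le> ennreal (cLpm\<^sup>2 / real b * (norm (y - a))\<^sup>2)"
      using A4(6)[of y a] unfolding We_def \<Delta>_def by simp
    have sumWe: "(\<Sum>i\<in>Gs. We i) \<le> ennreal (real G * (cLpm\<^sup>2 / real b * (norm (y - a))\<^sup>2))"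
    proof -
      have "(\<Sum>i\<in>Gs. We i) = ennreal (real G) * (ennreal (1 / real G) * (\<Sum>i\<in>Gs. We i))"
        using Gpos by (simp add: mult.assoc[symmetric] ennreal_mult[symmetric])
      also have "\<dots> \<le> ennreal (real G) * ennreal (cLpm\<^sup>2 / real b * (norm (y - a))\<^sup>2)"
        by (intro mult_left_mono A4') auto
      also have "\<dots> = ennreal (real G * (cLpm\<^sup>2 / real b * (norm (y - a))\<^sup>2))"
        by (rule ennreal_mult[symmetric]) auto
      finally show ?thesis .
    qed
    have We_fin: "We i < \<infinity>" if "i \<in> Gs" for i
    proof -
      have "We i \<le> (\<Sum>i\<in>Gs. We i)" using that finGs by (intro member_le_sum) auto
      also have "\<dots> < \<infinity>" using le_less_trans[OF sumWe ennreal_less_top] by simp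
      finally show ?thesis .
    qed
    define W where "W i = enn2real (We i)" for i
    have We_eq: "We i = ennreal (W i)" if "i \<in> Gs" for i
      using We_fin[OF that] unfolding W_def by (simp add: less_top)
    have W0: "0 \<le> W i" for i by (simp add: W_def)
    have SW: "(\<Sum>i\<in>Gs. W i) \<le> real G * (cLpm\<^sup>2 / real b * (norm (y - a))\<^sup>2)"
    proof -
      have "ennreal (\<Sum>i\<in>Gs. W i) = (\<Sum>i\<in>Gs. We i)"
        using We_eq W0 by (subst sum_ennreal[symmetric]) (auto intro: sum.cong)
      then have "ennreal (\<Sum>i\<in>Gs. W i) \<le> ennreal (real G * (cLpm\<^sup>2 / real b * (norm (y - a))\<^sup>2))"
        using sumWe by simp
      then show ?thesis using A4(1) by (subst (asm) ennreal_le_iff) auto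
    qed
    have mu: "\<exists>C. 0 \<le> C \<and> C \<le> W i + \<omega> * (W i + (norm (\<Delta> i))\<^sup>2) \<and>
          (\<forall>x. (\<integral>\<^sup>+u. ennreal ((norm (u - x))\<^sup>2) \<partial>(Dh i y a \<bind> Qd)) = ennreal (C + (norm (\<Delta> i - x))\<^sup>2))"
      if i: "i \<in> Gs" for i
      using Dh_sp[OF i] A4(4)[OF i] A4(5)[OF i] We_eq[OF i] W0 Qcomp
      by (intro mu_formula) (auto simp: \<Delta>_def We_def)
    then obtain Cr where Cr: "\<And>i. i \<in> Gs \<Longrightarrow> 0 \<le> Cr i \<and> Cr i \<le> W i + \<omega> * (W i + (norm (\<Delta> i))\<^sup>2) \<and>
          (\<forall>x. (\<integral>\<^sup>+u. ennreal ((norm (u - x))\<^sup>2) \<partial>(Dh i y a \<bind> Qd)) = ennreal (Cr i + (norm (\<Delta> i - x))\<^sup>2))"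
      by metis
    have Ps: "P s = PiM Gs (\<lambda>i. Dh i y a \<bind> Qd)" by (simp add: P_def s y_def)
    have "(\<Sum>i\<in>Gs. \<Sum>l\<in>Gs. \<integral>\<^sup>+q. ennreal ((norm (q i - q l))\<^sup>2) \<partial>P s)
        = ennreal (\<Sum>i\<in>Gs. \<Sum>l\<in>Gs. if i = l then 0 else Cr i + Cr l + (norm (\<Delta> i - \<Delta> l))\<^sup>2)"
      unfolding Ps using finGs mu_sp Cr by (intro c0_sum) auto
    also have "\<dots> \<le> ennreal (real G * (real G - 1) * K * (norm (\<gamma> *\<^sub>R snd s))\<^sup>2)"
    proof (rule ennreal_leI)
      have offd: "(\<Sum>i\<in>Gs. \<Sum>l\<in>Gs. if i = l then 0 else Cr i + Cr l + (norm (\<Delta> i - \<Delta> l))\<^sup>2)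
          = 2 * (real G - 1) * (\<Sum>i\<in>Gs. Cr i) + (\<Sum>i\<in>Gs. \<Sum>l\<in>Gs. (norm (\<Delta> i - \<Delta> l))\<^sup>2)"
        using pair_sum_offdiag[OF finGs, of "\<lambda>i l. (norm (\<Delta> i - \<Delta> l))\<^sup>2" Cr] Gcard by simp
      have sD: "(\<Sum>i\<in>Gs. \<Delta> i) = real G *\<^sub>R (nabla f y - nabla f a)"
        unfolding \<Delta>_def sum_subtractf sum_nabla by (simp add: scaleR_diff_right)
      have pn: "(\<Sum>i\<in>Gs. \<Sum>l\<in>Gs. (norm (\<Delta> i - \<Delta> l))\<^sup>2)
          = 2 * real G * (\<Sum>i\<in>Gs. (norm (\<Delta> i))\<^sup>2) - 2 * (real G)\<^sup>2 * (norm (nabla f y - nabla f a))\<^sup>2"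
        using pair_sum_norm[OF finGs, of \<Delta>] Gcard Gpos unfolding sD by (simp add: power_mult_distrib)
      have SC: "(\<Sum>i\<in>Gs. Cr i) \<le> (1 + \<omega>) * (\<Sum>i\<in>Gs. W i) + \<omega> * (\<Sum>i\<in>Gs. (norm (\<Delta> i))\<^sup>2)"
      proof -
        have "(\<Sum>i\<in>Gs. Cr i) \<le> (\<Sum>i\<in>Gs. W i + \<omega> * (W i + (norm (\<Delta> i))\<^sup>2))"
          using Cr by (intro sum_mono) auto
        also have "\<dots> = (1 + \<omega>) * (\<Sum>i\<in>Gs. W i) + \<omega> * (\<Sum>i\<in>Gs. (norm (\<Delta> i))\<^sup>2)"
          by (simp add: sum.distrib sum_distrib_left algebra_simps)
        finally show ?thesis .
      qed
      have A3': "(1 / real G) * (\<Sum>i\<in>Gs. (norm (\<Delta> i))\<^sup>2) - (norm (nabla f y - nabla f a))\<^sup>2 \<le> Lpm\<^sup>2 * (norm (y - a))\<^sup>2"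
        using A3(2)[of y a] unfolding \<Delta>_def by simp
      have "2 * (real G - 1) * (\<Sum>i\<in>Gs. Cr i) + 2 * real G * (\<Sum>i\<in>Gs. (norm (\<Delta> i))\<^sup>2) - 2 * (real G)\<^sup>2 * (norm (nabla f y - nabla f a))\<^sup>2
          \<le> real G * (real G - 1) * (4 * (\<omega> * L\<^sup>2 + (1 + \<omega>) * Lpm\<^sup>2 + (1 + \<omega>) * (cLpm\<^sup>2 / real b))) * (norm (y - a))\<^sup>2"
        using G2 Qcomp(1) A4(1) SC SW A3' A1sq[of y a]
        by (intro c0_arith) auto
      then show "(\<Sum>i\<in>Gs. \<Sum>l\<in>Gs. if i = l then 0 else Cr i + Cr l + (norm (\<Delta> i - \<Delta> l))\<^sup>2)
          \<le> real G * (real G - 1) * K * (norm (\<gamma> *\<^sub>R snd s))\<^sup>2"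
        unfolding offd pn K_def ya[symmetric] by simp
    qed
    finally show ?thesis .
  qed
  interpret M: prob_space M by (rule probM)
  note meas[measurable]
  define S where "S = (borel :: 'v measure) \<Otimes>\<^sub>M (borel :: 'v measure) \<Otimes>\<^sub>M count_space (UNIV :: bool set) \<Otimes>\<^sub>M PiM Gs (\<lambda>_. (borel :: 'v measure))"
  define \<Phi> where "\<Phi> \<omega>' = (x k \<omega>', g k \<omega>', c k \<omega>', restrict (qv k \<omega>') Gs)" for \<omega>'
  define R1 where "R1 a bb = ennreal (2 * (real G)\<^sup>2 * (2 * B * (norm (nabla f a))\<^sup>2 + 2 * B * L\<^sup>2 * (norm (\<gamma> *\<^sub>R bb))\<^sup>2 + \<zeta>\<^sup>2))" for a bb :: 'v
  define T0 where "T0 q = (\<Sum>i\<in>Gs. \<Sum>l\<in>Gs. ennreal ((norm (q i - q l))\<^sup>2))" for q :: "nat \<Rightarrow> 'v"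
  define U where "U z = (if fst (snd (snd z)) then R1 (fst z) (fst (snd z)) else T0 (snd (snd (snd z))))" for z :: "'v \<times> 'v \<times> bool \<times> (nat \<Rightarrow> 'v)"
  define N where "N = distr M (borel \<Otimes>\<^sub>M borel) (\<lambda>\<omega>'. (x k \<omega>', g k \<omega>'))"
  define Kr where "Kr s = distr (measure_pmf (bernoulli_pmf p) \<Otimes>\<^sub>M P s) S (\<lambda>(cc, q). (fst s, snd s, cc, q))" for s
  have fresh_k: "distr M S \<Phi> = N \<bind> Kr"
    using fresh[of k] unfolding S_def \<Phi>_def N_def Kr_def P_def by simp
  have R1_meas[measurable]: "(\<lambda>z. R1 (fst z) (snd z)) \<in> borel_measurable (borel \<Otimes>\<^sub>M borel)"
    unfolding R1_def by measurable
  have T0_meas[measurable]: "T0 \<in> borel_measurable (PiM Gs (\<lambda>_. borel))"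
    unfolding T0_def by measurable
  have \<Phi>_meas: "\<Phi> \<in> M \<rightarrow>\<^sub>M S"
    unfolding \<Phi>_def S_def by measurable
  have U_meas: "U \<in> borel_measurable S"
  proof -
    have m0: "(\<lambda>z. (fst z, fst (snd z))) \<in> S \<rightarrow>\<^sub>M (borel \<Otimes>\<^sub>M borel)"
      unfolding S_def by measurable
    have m1[measurable]: "(\<lambda>z. R1 (fst z) (fst (snd z))) \<in> borel_measurable S"
      using measurable_compose[OF m0 R1_meas] by simp
    have m2'[measurable]: "(\<lambda>z. snd (snd (snd z))) \<in> S \<rightarrow>\<^sub>M PiM Gs (\<lambda>_. borel)"
      unfolding S_def by measurable
    have m2[measurable]: "(\<lambda>z. T0 (snd (snd (snd z)))) \<in> borel_measurable S"
      using measurable_compose[OF m2' T0_meas] by simp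
    have m3[measurable]: "Measurable.pred S (\<lambda>z. fst (snd (snd z)))"
      unfolding pred_def S_def by measurable
    show ?thesis unfolding U_def by measurable
  qed
  have Ki_meas: "(\<lambda>s. Dh i (fst s - \<gamma> *\<^sub>R snd s) (fst s) \<bind> Qd) \<in> (borel \<Otimes>\<^sub>M borel) \<rightarrow>\<^sub>M prob_algebra borel"
    if i: "i \<in> Gs" for i
  proof (rule measurable_bind_prob_space[OF _ Qcomp(2)])
    have m1: "(\<lambda>s::'v \<times> 'v. (fst s - \<gamma> *\<^sub>R snd s, fst s)) \<in> (borel \<Otimes>\<^sub>M borel) \<rightarrow>\<^sub>M (borel \<Otimes>\<^sub>M borel)"
      by measurable
    have m2: "(\<lambda>s::'v \<times> 'v. (fst s - \<gamma> *\<^sub>R snd s, fst s)) \<in> (borel \<Otimes>\<^sub>M borel) \<rightarrow>\<^sub>M borel"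
      using m1 by (simp add: borel_prod)
    show "(\<lambda>s. Dh i (fst s - \<gamma> *\<^sub>R snd s) (fst s)) \<in> (borel \<Otimes>\<^sub>M borel) \<rightarrow>\<^sub>M prob_algebra borel"
      using measurable_compose[OF m2 A4(3)[OF i]] by simp
  qed
  have P_meas: "P \<in> (borel \<Otimes>\<^sub>M borel) \<rightarrow>\<^sub>M prob_algebra (PiM Gs (\<lambda>_. borel))"
    unfolding P_def by (rule measurable_PiM_kernel) (rule Ki_meas)
  have bern_in: "measure_pmf (bernoulli_pmf p) \<in> space (subprob_algebra (count_space UNIV))"
    by (simp add: space_subprob_algebra prob_space_imp_subprob_space measure_pmf.prob_space_axioms)
  have BP_meas: "(\<lambda>s. measure_pmf (bernoulli_pmf p) \<Otimes>\<^sub>M P s) \<in> (borel \<Otimes>\<^sub>M borel) \<rightarrow>\<^sub>M subprob_algebra (count_space UNIV \<Otimes>\<^sub>M PiM Gs (\<lambda>_. borel))"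
    by (rule measurable_pair_measure[OF measurable_const[OF bern_in] measurable_prob_algebraD[OF P_meas]])
  have Kr_meas0: "Kr \<in> (borel \<Otimes>\<^sub>M borel) \<rightarrow>\<^sub>M subprob_algebra S"
    unfolding Kr_def
  proof (rule measurable_distr2[OF _ BP_meas])
    show "(\<lambda>(s, w). case w of (cc, q) \<Rightarrow> (fst s, snd s, cc, q)) \<in> (borel \<Otimes>\<^sub>M borel) \<Otimes>\<^sub>M (count_space UNIV \<Otimes>\<^sub>M PiM Gs (\<lambda>_. borel)) \<rightarrow>\<^sub>M S"
      unfolding S_def by measurable
  qed
  have sN: "sets N = sets (borel \<Otimes>\<^sub>M borel)" by (simp add: N_def)
  have Kr_meas: "Kr \<in> N \<rightarrow>\<^sub>M subprob_algebra S"
    using Kr_meas0 by (simp cong: measurable_cong_sets[OF sN refl])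
  have inner: "(\<integral>\<^sup>+z. U z \<partial>Kr s) \<le> R1 (fst s) (snd s) * ennreal p
      + ennreal (real G * (real G - 1) * K * (norm (\<gamma> *\<^sub>R snd s))\<^sup>2) * ennreal (1 - p)" for s
  proof -
    have Ps_in: "P s \<in> space (prob_algebra (PiM Gs (\<lambda>_. borel)))"
      using measurable_space[OF P_meas, of s] by (auto simp: space_pair_measure)
    interpret Ps: prob_space "P s" using Ps_in by (simp add: space_prob_algebra)
    have sPs: "sets (P s) = sets (PiM Gs (\<lambda>_. borel))" using Ps_in by (simp add: space_prob_algebra)
    have sBP: "sets (measure_pmf (bernoulli_pmf p) \<Otimes>\<^sub>M P s) = sets (count_space UNIV \<Otimes>\<^sub>M PiM Gs (\<lambda>_. (borel :: 'v measure)))"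
      using sPs by (intro sets_pair_measure_cong) auto
    have map_meas: "(\<lambda>(cc, q). (fst s, snd s, cc, q)) \<in> (measure_pmf (bernoulli_pmf p) \<Otimes>\<^sub>M P s) \<rightarrow>\<^sub>M S"
      unfolding measurable_cong_sets[OF sBP refl] S_def by measurable
    have U2_meas: "(\<lambda>w. U (fst s, snd s, fst w, snd w)) \<in> borel_measurable (measure_pmf (bernoulli_pmf p) \<Otimes>\<^sub>M P s)"
      using measurable_compose[OF map_meas U_meas] by (simp add: split_beta)
    have "(\<integral>\<^sup>+z. U z \<partial>Kr s) = (\<integral>\<^sup>+w. U (fst s, snd s, fst w, snd w) \<partial>(measure_pmf (bernoulli_pmf p) \<Otimes>\<^sub>M P s))"
      unfolding Kr_def by (subst nn_integral_distr[OF map_meas]) (simp_all add: split_beta U_meas)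
    also have "\<dots> = (\<integral>\<^sup>+cc. \<integral>\<^sup>+q. U (fst s, snd s, cc, q) \<partial>P s \<partial>measure_pmf (bernoulli_pmf p))"
      using Ps.nn_integral_fst[OF U2_meas] by simp
    also have "\<dots> = (\<integral>\<^sup>+q. U (fst s, snd s, True, q) \<partial>P s) * ennreal p + (\<integral>\<^sup>+q. U (fst s, snd s, False, q) \<partial>P s) * ennreal (1 - p)"
      using params by (simp add: nn_integral_bernoulli_pmf)
    also have "(\<integral>\<^sup>+q. U (fst s, snd s, True, q) \<partial>P s) = R1 (fst s) (snd s)"
      by (simp add: U_def Ps.emeasure_space_1)
    also have "(\<integral>\<^sup>+q. U (fst s, snd s, False, q) \<partial>P s) = (\<Sum>i\<in>Gs. \<Sum>l\<in>Gs. \<integral>\<^sup>+q. ennreal ((norm (q i - q l))\<^sup>2) \<partial>P s)"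
    proof -
      have "(\<integral>\<^sup>+q. U (fst s, snd s, False, q) \<partial>P s) = (\<integral>\<^sup>+q. (\<Sum>i\<in>Gs. \<Sum>l\<in>Gs. ennreal ((norm (q i - q l))\<^sup>2)) \<partial>P s)"
        by (simp add: U_def T0_def)
      also have "\<dots> = (\<Sum>i\<in>Gs. \<integral>\<^sup>+q. (\<Sum>l\<in>Gs. ennreal ((norm (q i - q l))\<^sup>2)) \<partial>P s)"
        by (rule nn_integral_sum) (simp add: measurable_cong_sets[OF sPs refl])
      also have "\<dots> = (\<Sum>i\<in>Gs. \<Sum>l\<in>Gs. \<integral>\<^sup>+q. ennreal ((norm (q i - q l))\<^sup>2) \<partial>P s)"
        by (intro sum.cong refl nn_integral_sum) (simp add: measurable_cong_sets[OF sPs refl])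
      finally show ?thesis .
    qed
    finally show ?thesis
      by (rule ord_eq_le_trans) (intro add_mono mult_right_mono c0 order_refl, simp)
  qed
  have LHS_eq: "(\<Sum>i\<in>Gs. \<Sum>l\<in>Gs. \<integral>\<^sup>+\<omega>'. ennreal ((norm (gi (Suc k) i \<omega>' - gi (Suc k) l \<omega>'))\<^sup>2) \<partial>M)
      = (\<integral>\<^sup>+\<omega>'. (\<Sum>i\<in>Gs. \<Sum>l\<in>Gs. ennreal ((norm (gi (Suc k) i \<omega>' - gi (Suc k) l \<omega>'))\<^sup>2)) \<partial>M)"
  proof -
    have "(\<integral>\<^sup>+\<omega>'. (\<Sum>i\<in>Gs. \<Sum>l\<in>Gs. ennreal ((norm (gi (Suc k) i \<omega>' - gi (Suc k) l \<omega>'))\<^sup>2)) \<partial>M)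
        = (\<Sum>i\<in>Gs. \<integral>\<^sup>+\<omega>'. (\<Sum>l\<in>Gs. ennreal ((norm (gi (Suc k) i \<omega>' - gi (Suc k) l \<omega>'))\<^sup>2)) \<partial>M)"
      by (rule nn_integral_sum) measurable
    also have "\<dots> = (\<Sum>i\<in>Gs. \<Sum>l\<in>Gs. \<integral>\<^sup>+\<omega>'. ennreal ((norm (gi (Suc k) i \<omega>' - gi (Suc k) l \<omega>'))\<^sup>2) \<partial>M)"
      by (intro sum.cong refl nn_integral_sum) measurable
    finally show ?thesis by simp
  qed
  have pw: "(\<Sum>i\<in>Gs. \<Sum>l\<in>Gs. ennreal ((norm (gi (Suc k) i \<omega>' - gi (Suc k) l \<omega>'))\<^sup>2)) \<le> U (\<Phi> \<omega>')" for \<omega>'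
  proof (cases "c k \<omega>'")
    case True
    define y' where "y' = x k \<omega>' - \<gamma> *\<^sub>R g k \<omega>'"
    have gi_eq: "gi (Suc k) i \<omega>' = nabla (fi i) y'" if "i \<in> Gs" for i
      using step_good[OF that, of k \<omega>'] True step_x[of k \<omega>'] by (simp add: y'_def)
    have "(\<Sum>i\<in>Gs. \<Sum>l\<in>Gs. ennreal ((norm (gi (Suc k) i \<omega>' - gi (Suc k) l \<omega>'))\<^sup>2))
        = (\<Sum>i\<in>Gs. \<Sum>l\<in>Gs. ennreal ((norm (nabla (fi i) y' - nabla (fi l) y'))\<^sup>2))"
      using gi_eq by (intro sum.cong refl) auto
    also have "\<dots> = ennreal (\<Sum>i\<in>Gs. \<Sum>l\<in>Gs. (norm (nabla (fi i) y' - nabla (fi l) y'))\<^sup>2)"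
      by (rule sum2_ennreal) simp
    also have "\<dots> \<le> R1 (x k \<omega>') (g k \<omega>')"
      unfolding R1_def
    proof (rule ennreal_leI)
      have "norm (y' - x k \<omega>') = norm (\<gamma> *\<^sub>R g k \<omega>')" by (simp add: y'_def)
      then show "(\<Sum>i\<in>Gs. \<Sum>l\<in>Gs. (norm (nabla (fi i) y' - nabla (fi l) y'))\<^sup>2)
          \<le> 2 * (real G)\<^sup>2 * (2 * B * (norm (nabla f (x k \<omega>')))\<^sup>2 + 2 * B * L\<^sup>2 * (norm (\<gamma> *\<^sub>R g k \<omega>'))\<^sup>2 + \<zeta>\<^sup>2)"
        using c1[of y' "x k \<omega>'"] by simp
    qed
    finally show ?thesis by (simp add: U_def \<Phi>_def True)
  next
    case False
    have "gi (Suc k) i \<omega>' - gi (Suc k) l \<omega>' = restrict (qv k \<omega>') Gs i - restrict (qv k \<omega>') Gs l"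
      if "i \<in> Gs" "l \<in> Gs" for i l
      using step_good[OF that(1), of k \<omega>'] step_good[OF that(2), of k \<omega>'] False that by simp
    then show ?thesis by (simp add: U_def \<Phi>_def False T0_def cong: sum.cong)
  qed
  define h where "h s = R1 (fst s) (snd s) * ennreal p
      + ennreal (real G * (real G - 1) * K * (norm (\<gamma> *\<^sub>R snd s))\<^sup>2) * ennreal (1 - p)" for s :: "'v \<times> 'v"
  have h_meas: "h \<in> borel_measurable (borel \<Otimes>\<^sub>M borel)" unfolding h_def by measurable
  have chain: "(\<integral>\<^sup>+\<omega>'. U (\<Phi> \<omega>') \<partial>M) \<le> (\<integral>\<^sup>+\<omega>'. h (x k \<omega>', g k \<omega>') \<partial>M)"
  proof -
    have "(\<integral>\<^sup>+\<omega>'. U (\<Phi> \<omega>') \<partial>M) = (\<integral>\<^sup>+z. U z \<partial>distr M S \<Phi>)"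
      by (subst nn_integral_distr[OF \<Phi>_meas]) (simp_all add: U_meas)
    also have "\<dots> = (\<integral>\<^sup>+s. \<integral>\<^sup>+z. U z \<partial>Kr s \<partial>N)"
      unfolding fresh_k by (rule nn_integral_bind[OF U_meas Kr_meas])
    also have "\<dots> \<le> (\<integral>\<^sup>+s. h s \<partial>N)"
      by (intro nn_integral_mono) (unfold h_def, rule inner)
    also have "\<dots> = (\<integral>\<^sup>+\<omega>'. h (x k \<omega>', g k \<omega>') \<partial>M)"
      unfolding N_def by (subst nn_integral_distr) (simp_all add: h_meas)
    finally show ?thesis .
  qed
  define E1 where "E1 = (\<integral>\<^sup>+\<omega>'. ennreal ((norm (x (Suc k) \<omega>' - x k \<omega>'))\<^sup>2) \<partial>M)"
  define E2 where "E2 = (\<integral>\<^sup>+\<omega>'. ennreal ((norm (nabla f (x k \<omega>')))\<^sup>2) \<partial>M)"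
  define c1 where "c1 = 4 * (real G)\<^sup>2 * B * p"
  define c2 where "c2 = 4 * (real G)\<^sup>2 * B * L\<^sup>2 * p + real G * (real G - 1) * K * (1 - p)"
  define c3 where "c3 = 2 * (real G)\<^sup>2 * \<zeta>\<^sup>2 * p"
  have c1_0: "0 \<le> c1" unfolding c1_def using A2(1) params by simp
  have c2_0: "0 \<le> c2" unfolding c2_def using A2(1) params G2 K0 by (intro add_nonneg_nonneg mult_nonneg_nonneg) auto
  have c3_0: "0 \<le> c3" unfolding c3_def using params by simp
  have hx: "h (x k \<omega>', g k \<omega>') = ennreal c1 * ennreal ((norm (nabla f (x k \<omega>')))\<^sup>2)
      + ennreal c2 * ennreal ((norm (x (Suc k) \<omega>' - x k \<omega>'))\<^sup>2) + ennreal c3" for \<omega>'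
  proof -
    define nv where "nv = (norm (nabla f (x k \<omega>')))\<^sup>2"
    define dv where "dv = (norm (\<gamma> *\<^sub>R g k \<omega>'))\<^sup>2"
    have dv': "(norm (x (Suc k) \<omega>' - x k \<omega>'))\<^sup>2 = dv" unfolding dv_def by (simp add: step_x)
    have nv0: "0 \<le> nv" and dv0: "0 \<le> dv" by (simp_all add: nv_def dv_def)
    define r1 where "r1 = 2 * (real G)\<^sup>2 * (2 * B * nv + 2 * B * L\<^sup>2 * dv + \<zeta>\<^sup>2)"
    define r2 where "r2 = real G * (real G - 1) * K * dv"
    have r10: "0 \<le> r1" unfolding r1_def using A2(1) nv0 dv0 by (intro mult_nonneg_nonneg add_nonneg_nonneg) auto
    have r20: "0 \<le> r2" unfolding r2_def using G2 K0 dv0 by (intro mult_nonneg_nonneg) auto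
    have "h (x k \<omega>', g k \<omega>') = ennreal r1 * ennreal p + ennreal r2 * ennreal (1 - p)"
      unfolding h_def R1_def r1_def r2_def nv_def dv_def by simp
    also have "\<dots> = ennreal (r1 * p) + ennreal (r2 * (1 - p))"
      using r10 r20 params by (simp add: ennreal_mult)
    also have "\<dots> = ennreal (r1 * p + r2 * (1 - p))"
      using r10 r20 params by (intro ennreal_plus[symmetric]) auto
    also have "r1 * p + r2 * (1 - p) = c1 * nv + c2 * dv + c3"
      unfolding r1_def r2_def c1_def c2_def c3_def by (simp add: algebra_simps)
    also have "ennreal (c1 * nv + c2 * dv + c3) = ennreal (c1 * nv) + ennreal (c2 * dv) + ennreal c3"
      using c1_0 c2_0 c3_0 nv0 dv0 by (simp add: ennreal_plus)
    also have "\<dots> = ennreal c1 * ennreal nv + ennreal c2 * ennreal dv + ennreal c3"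
      using c1_0 c2_0 nv0 dv0 by (simp add: ennreal_mult)
    finally show ?thesis unfolding nv_def dv' .
  qed
  have int_h: "(\<integral>\<^sup>+\<omega>'. h (x k \<omega>', g k \<omega>') \<partial>M) = ennreal c1 * E2 + ennreal c2 * E1 + ennreal c3"
  proof -
    have "(\<integral>\<^sup>+\<omega>'. h (x k \<omega>', g k \<omega>') \<partial>M) = (\<integral>\<^sup>+\<omega>'. ennreal c1 * ennreal ((norm (nabla f (x k \<omega>')))\<^sup>2)
      + ennreal c2 * ennreal ((norm (x (Suc k) \<omega>' - x k \<omega>'))\<^sup>2) + ennreal c3 \<partial>M)"
      by (simp add: hx)
    also have "\<dots> = (\<integral>\<^sup>+\<omega>'. ennreal c1 * ennreal ((norm (nabla f (x k \<omega>')))\<^sup>2)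
      + ennreal c2 * ennreal ((norm (x (Suc k) \<omega>' - x k \<omega>'))\<^sup>2) \<partial>M) + (\<integral>\<^sup>+\<omega>'. ennreal c3 \<partial>M)"
      by (rule nn_integral_add) measurable
    also have "(\<integral>\<^sup>+\<omega>'. ennreal c1 * ennreal ((norm (nabla f (x k \<omega>')))\<^sup>2)
      + ennreal c2 * ennreal ((norm (x (Suc k) \<omega>' - x k \<omega>'))\<^sup>2) \<partial>M)
      = (\<integral>\<^sup>+\<omega>'. ennreal c1 * ennreal ((norm (nabla f (x k \<omega>')))\<^sup>2) \<partial>M)
      + (\<integral>\<^sup>+\<omega>'. ennreal c2 * ennreal ((norm (x (Suc k) \<omega>' - x k \<omega>'))\<^sup>2) \<partial>M)"
      by (rule nn_integral_add) measurable
    also have "(\<integral>\<^sup>+\<omega>'. ennreal c1 * ennreal ((norm (nabla f (x k \<omega>')))\<^sup>2) \<partial>M) = ennreal c1 * E2"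
      unfolding E2_def by (rule nn_integral_cmult) measurable
    also have "(\<integral>\<^sup>+\<omega>'. ennreal c2 * ennreal ((norm (x (Suc k) \<omega>' - x k \<omega>'))\<^sup>2) \<partial>M) = ennreal c2 * E1"
      unfolding E1_def by (rule nn_integral_cmult) measurable
    also have "(\<integral>\<^sup>+\<omega>'. ennreal c3 \<partial>M) = ennreal c3"
      by (simp add: M.emeasure_space_1)
    finally show ?thesis .
  qed
  have bnd: "(\<Sum>i\<in>Gs. \<Sum>l\<in>Gs. \<integral>\<^sup>+\<omega>'. ennreal ((norm (gi (Suc k) i \<omega>' - gi (Suc k) l \<omega>'))\<^sup>2) \<partial>M)
      \<le> ennreal c1 * E2 + ennreal c2 * E1 + ennreal c3"
  proof -
    have "(\<Sum>i\<in>Gs. \<Sum>l\<in>Gs. \<integral>\<^sup>+\<omega>'. ennreal ((norm (gi (Suc k) i \<omega>' - gi (Suc k) l \<omega>'))\<^sup>2) \<partial>M)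
        \<le> (\<integral>\<^sup>+\<omega>'. U (\<Phi> \<omega>') \<partial>M)"
      unfolding LHS_eq by (rule nn_integral_mono) (rule pw)
    also have "\<dots> \<le> (\<integral>\<^sup>+\<omega>'. h (x k \<omega>', g k \<omega>') \<partial>M)" by (rule chain)
    finally show ?thesis unfolding int_h .
  qed
  define q where "q = 1 / (real G * (real G - 1))"
  have q0: "0 \<le> q" unfolding q_def using G2 by simp
  have qc1: "q * c1 \<le> 8 * B * p"
    using frac_G_le[OF G2, of "4 * B * p"] A2(1) params unfolding q_def c1_def by (simp add: mult_ac)
  have qc3: "q * c3 \<le> 4 * p * \<zeta>\<^sup>2"
    using frac_G_le[OF G2, of "2 * \<zeta>\<^sup>2 * p"] params unfolding q_def c3_def by (simp add: mult_ac)
  have qc2: "q * c2 \<le> 8 * B * p * L\<^sup>2 + 4 * (1 - p) * (\<omega> * L\<^sup>2 + (1 + \<omega>) * Lpm\<^sup>2 + (1 + \<omega>) * cLpm\<^sup>2 / real b)"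
  proof -
    have GG: "real G * (real G - 1) > 0" using G2 by simp
    have ne: "real G * (real G - 1) \<noteq> 0" using GG by linarith
    have qGG: "q * (real G * (real G - 1)) = 1" unfolding q_def by (metis ne times_divide_eq_left mult_1 divide_self)
    have "q * c2 = q * (4 * (real G)\<^sup>2 * B * L\<^sup>2 * p) + (q * (real G * (real G - 1))) * (K * (1 - p))"
      unfolding c2_def by (simp add: algebra_simps)
    also have "\<dots> = q * (4 * (real G)\<^sup>2 * B * L\<^sup>2 * p) + K * (1 - p)" unfolding qGG by simp
    finally have "q * c2 = q * (4 * (real G)\<^sup>2 * B * L\<^sup>2 * p) + K * (1 - p)" .
    also have "q * (4 * (real G)\<^sup>2 * B * L\<^sup>2 * p) \<le> 8 * B * p * L\<^sup>2"
      using frac_G_le[OF G2, of "4 * B * L\<^sup>2 * p"] A2(1) params unfolding q_def by (simp add: mult_ac)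
    finally have le: "q * c2 \<le> 8 * B * p * L\<^sup>2 + K * (1 - p)" by simp
    have "K * (1 - p) = 4 * (1 - p) * (\<omega> * L\<^sup>2 + (1 + \<omega>) * Lpm\<^sup>2 + (1 + \<omega>) * cLpm\<^sup>2 / real b)"
      unfolding K_def by (simp only: mult_ac)
    then show ?thesis using le by simp
  qed
  have "ennreal q * (\<Sum>i\<in>Gs. \<Sum>l\<in>Gs. \<integral>\<^sup>+\<omega>'. ennreal ((norm (gi (Suc k) i \<omega>' - gi (Suc k) l \<omega>'))\<^sup>2) \<partial>M)
      \<le> ennreal q * (ennreal c1 * E2 + ennreal c2 * E1 + ennreal c3)"
    by (intro mult_left_mono bnd) simp
  also have "\<dots> = ennreal (q * c2) * E1 + ennreal (q * c1) * E2 + ennreal (q * c3)"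
    using q0 c1_0 c2_0 c3_0 by (simp add: distrib_left ennreal_mult mult.assoc add_ac)
  also have "\<dots> \<le> ennreal (8 * B * p * L\<^sup>2 + 4 * (1 - p) * (\<omega> * L\<^sup>2 + (1 + \<omega>) * Lpm\<^sup>2 + (1 + \<omega>) * cLpm\<^sup>2 / real b)) * E1
      + ennreal (8 * B * p) * E2 + ennreal (4 * p * \<zeta>\<^sup>2)"
    using qc1 qc2 qc3 by (intro add_mono mult_right_mono ennreal_leI) auto
  finally show ?thesis unfolding q_def E1_def E2_def .
qed

end
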